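(* For every integer $b\ge2$, digit $d\in\{0,\dots,b-1\}$ and $k\ge0$, $$H^{(k)}=\int_{[b^{-1},1)}\frac{d\mu_k(x)}{x}.$$
   Context: For an integer $n\ge0$, $k(n)$ denotes the number of occurrences of the digit $d$ in the base-$b$ representation of $n$ without leading zeros, and $H^{(k)}=\sum_{n\ge1,\ k(n)=k}1/n$. A string is a finite sequence $X=(d_l,\dots,d_1)$ of digits in $\{0,\dots,b-1\}$ (leading zeros allowed), of length $|X|=l\ge0$ (the empty string has length $0$); its value is $n(X)=\sum_{i=1}^{l}d_ib^{i-1}$ ($n(\emptyset)=0$). For $k\ge0$, $\mu_k$ is the discrete measure on $[0,1)$ defined by $\mu_k=\sum_{X}b^{-|X|}\delta_{n(X)/b^{|X|}}$, the sum running over all strings $X$ containing the digit $d$ exactly $k$ times (masses at the same point add). It has total mass $b$. *)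

theory Defs
  imports "HOL-Analysis.Analysis"
begin

function digit_count :: "nat \<Rightarrow> nat \<Rightarrow> nat \<Rightarrow> nat" where
  "digit_count b d n =
     (if n = 0 \<or> b < 2 then 0
      else (if n mod b = d then 1 else 0) + digit_count b d (n div b))"
  by auto
termination
  by (relation "Wellfounded.measure (\<lambda>(b, d, n). n)") auto

definition H :: "nat \<Rightarrow> nat \<Rightarrow> nat \<Rightarrow> ennreal" where
  "H b d k = (\<Sum>\<^sub>\<infinity> n \<in> {n. n \<ge> 1 \<and> digit_count b d n = k}. ennreal (1 / real n))"

text \<open>Strings: lists of digits, most significant first, X = (d_l, ..., d_1).\<close>
definition is_string :: "nat \<Rightarrow> nat list \<Rightarrow> bool" where
  "is_string b X \<longleftrightarrow> (\<forall>x \<in> set X. x < b)"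

definition str_val :: "nat \<Rightarrow> nat list \<Rightarrow> nat" where
  "str_val b X = foldl (\<lambda>a x. a * b + x) 0 X"

definition str_weight :: "nat \<Rightarrow> nat \<Rightarrow> nat \<Rightarrow> nat list \<Rightarrow> ennreal" where
  "str_weight b d k X =
     (if is_string b X \<and> count_list X d = k then ennreal (1 / real b ^ length X) else 0)"

text \<open>mu_k = sum_X b^(-|X|) delta_{n(X)/b^|X|}: push-forward of the weighted
  counting measure on strings under X \<mapsto> n(X)/b^|X|, a Borel measure on the reals
  (concentrated on [0,1)).\<close>
definition mu :: "nat \<Rightarrow> nat \<Rightarrow> nat \<Rightarrow> real measure" where
  "mu b d k = distr (density (count_space UNIV) (str_weight b d k)) borel
                (\<lambda>X. real (str_val b X) / real b ^ length X)"

end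

theory Submission
  imports Defs
begin

lemma nn_integral_count_space_SUP:
  fixes f :: "'a::countable \<Rightarrow> ennreal"
  shows "(\<integral>\<^sup>+x. f x \<partial>count_space UNIV) = (SUP F\<in>{F. finite F \<and> F \<subseteq> UNIV}. sum f F)"
proof (rule antisym)
  define F where "F n = {x::'a. to_nat x < n}" for n
  have finF: "finite (F n)" for n
    unfolding F_def using finite_vimageI[of "{..<n}" "to_nat :: 'a \<Rightarrow> nat"]
    by (simp add: vimage_def)
  have eq: "f x = (SUP n. f x * indicator (F n) x)" for x
  proof (rule antisym)
    show "f x \<le> (SUP n. f x * indicator (F n) x)"
      by (rule SUP_upper2[of "Suc (to_nat x)"]) (auto simp: F_def)
    show "(SUP n. f x * indicator (F n) x) \<le> f x"
      by (rule SUP_least) (auto simp: indicator_def)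
  qed
  have inc: "incseq (\<lambda>n x. f x * indicator (F n) x)"
    by (auto simp: incseq_def le_fun_def F_def indicator_def intro!: mult_left_mono)
  have "(\<integral>\<^sup>+x. f x \<partial>count_space UNIV) = (\<integral>\<^sup>+x. (SUP n. f x * indicator (F n) x) \<partial>count_space UNIV)"
    using eq by (metis (no_types, lifting) ext)
  also have "\<dots> = (SUP n. \<integral>\<^sup>+x. f x * indicator (F n) x \<partial>count_space UNIV)"
    by (rule nn_integral_monotone_convergence_SUP[OF inc]) simp
  also have "\<dots> = (SUP n. sum f (F n))"
    using finF by (simp add: nn_integral_indicator_finite)
  also have "\<dots> \<le> (SUP F\<in>{F. finite F \<and> F \<subseteq> UNIV}. sum f F)"
    by (rule SUP_least, rule SUP_upper) (use finF in auto)
  finally show "(\<integral>\<^sup>+x. f x \<partial>count_space UNIV) \<le> (SUP F\<in>{F. finite F \<and> F \<subseteq> UNIV}. sum f F)" .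
next
  show "(SUP F\<in>{F. finite F \<and> F \<subseteq> UNIV}. sum f F) \<le> (\<integral>\<^sup>+x. f x \<partial>count_space UNIV)"
  proof (rule SUP_least)
    fix G assume "G \<in> {F. finite F \<and> F \<subseteq> (UNIV::'a set)}"
    then have G: "finite G" by auto
    have "sum f G = (\<integral>\<^sup>+x. f x * indicator G x \<partial>count_space UNIV)"
      using G by (simp add: nn_integral_indicator_finite)
    also have "\<dots> \<le> (\<integral>\<^sup>+x. f x \<partial>count_space UNIV)"
      by (rule nn_integral_mono) (auto simp: indicator_def)
    finally show "sum f G \<le> (\<integral>\<^sup>+x. f x \<partial>count_space UNIV)" .
  qed
qed

lemma infsum_nn_integral_countable:
  fixes f :: "'a::countable \<Rightarrow> ennreal"
  shows "infsum f UNIV = (\<integral>\<^sup>+x. f x \<partial>count_space UNIV)"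
  by (simp add: nn_integral_count_space_SUP nonneg_infsum_complete)

function digs :: "nat \<Rightarrow> nat \<Rightarrow> nat list" where
  "digs b n = (if n = 0 \<or> b < 2 then [] else digs b (n div b) @ [n mod b])"
  by auto
termination
  by (relation "Wellfounded.measure (\<lambda>(b, n). n)") auto

declare digs.simps[simp del] digit_count.simps[simp del]

lemma str_val_snoc: "str_val b (xs @ [x]) = str_val b xs * b + x"
  by (simp add: str_val_def)

lemma foldl_acc: "foldl (\<lambda>a x. a * b + x) (a::nat) xs = a * b ^ length xs + foldl (\<lambda>a x. a * b + x) 0 xs"
proof (induction xs arbitrary: a)
  case Nil then show ?case by (simp add: str_val_def)
next
  case (Cons y ys)
  show ?case using Cons[of "a * b + y"] Cons[of y] by (simp add: algebra_simps)
qed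

lemma str_val_Cons: "str_val b (x # xs) = x * b ^ length xs + str_val b xs"
  unfolding str_val_def by (simp only: foldl_Cons, subst foldl_acc) simp

lemma str_val_lt: "is_string b X \<Longrightarrow> str_val b X < b ^ length X"
proof (induction X rule: rev_induct)
  case Nil then show ?case by (simp add: str_val_def)
next
  case (snoc x xs)
  then have "str_val b xs < b ^ length xs" "x < b" by (auto simp: is_string_def)
  then have "str_val b xs + 1 \<le> b ^ length xs" by simp
  then have "(str_val b xs + 1) * b \<le> b ^ length xs * b" by (rule mult_right_mono) simp
  then show ?case using \<open>x < b\<close> by (simp add: str_val_snoc algebra_simps)
qed

lemma digs_props:
  assumes "b \<ge> 2"
  shows "str_val b (digs b n) = n \<and> is_string b (digs b n) \<and>
         count_list (digs b n) d = digit_count b d n \<and>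
         (n > 0 \<longrightarrow> digs b n \<noteq> [] \<and> hd (digs b n) \<noteq> 0)"
proof (induction n rule: less_induct)
  case (less n)
  show ?case
  proof (cases "n = 0")
    case True then show ?thesis by (simp add: digs.simps str_val_def is_string_def digit_count.simps)
  next
    case False
    have lt: "n div b < n" using False assms by simp
    note IH = less[OF lt]
    have e: "digs b n = digs b (n div b) @ [n mod b]" using False assms by (simp add: digs.simps)
    have dc: "digit_count b d n = (if n mod b = d then 1 else 0) + digit_count b d (n div b)"
      using False assms by (subst digit_count.simps) simp
    have hd: "hd (digs b n) \<noteq> 0"
    proof (cases "n div b = 0")
      case True
      then have "digs b (n div b) = []" by (simp add: digs.simps)
      moreover have "n mod b = n" using True assms by (simp add: div_eq_0_iff)
      ultimately show ?thesis using e False by simp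
    next
      case False
      then have "n div b > 0" by simp
      then show ?thesis using IH e by simp
    qed
    have s1: "str_val b (digs b n) = n"
      using IH by (simp only: e str_val_snoc) simp
    have s2: "is_string b (digs b n)"
      using IH assms unfolding e is_string_def by simp
    have s3: "count_list (digs b n) d = digit_count b d n"
      using IH unfolding e dc by simp
    have s4: "digs b n \<noteq> []" unfolding e by simp
    show ?thesis using s1 s2 s3 s4 hd by blast
  qed
qed

lemma digs_str_val:
  assumes "b \<ge> 2"
  shows "is_string b X \<Longrightarrow> (X = [] \<or> hd X \<noteq> 0) \<Longrightarrow> digs b (str_val b X) = X"
proof (induction X rule: rev_induct)
  case Nil then show ?case by (simp add: str_val_def digs.simps)
next
  case (snoc x xs)
  have xb: "x < b" and sx: "is_string b xs" using snoc.prems by (auto simp: is_string_def)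
  have IH: "digs b (str_val b xs) = xs"
  proof (cases "xs = []")
    case True then show ?thesis by (simp add: str_val_def digs.simps)
  next
    case False then show ?thesis using snoc.IH sx snoc.prems by simp
  qed
  have pos: "str_val b (xs @ [x]) > 0"
  proof (cases "xs = []")
    case True then show ?thesis using snoc.prems by (simp add: str_val_def)
  next
    case False
    then obtain y ys where "xs = y # ys" by (cases xs) auto
    then have "y \<noteq> 0" using snoc.prems by simp
    then have "str_val b (xs @ [x]) \<ge> y * b ^ length (ys @ [x])"
      using \<open>xs = y # ys\<close> by (simp add: str_val_Cons)
    moreover have "y * b ^ length (ys @ [x]) > 0" using \<open>y \<noteq> 0\<close> assms by simp
    ultimately show ?thesis by linarith
  qed
  have "str_val b (xs @ [x]) mod b = x" "str_val b (xs @ [x]) div b = str_val b xs"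
    using xb by (simp_all add: str_val_snoc)
  then show ?case using pos assms IH by (subst digs.simps) simp
qed


lemma pointwise:
  assumes b: "b \<ge> 2"
  shows "str_weight b d k X * (ennreal (1 / (real (str_val b X) / real b ^ length X)) *
           indicator {1 / real b ..< 1} (real (str_val b X) / real b ^ length X))
       = (if is_string b X \<and> count_list X d = k \<and> X \<noteq> [] \<and> hd X \<noteq> 0
          then ennreal (1 / real (str_val b X)) else 0)"
proof (cases "is_string b X \<and> count_list X d = k")
  case False then show ?thesis by (auto simp: str_weight_def)
next
  case True
  show ?thesis
  proof (cases X)
    case Nil
    have "\<not> (1 / real b \<le> 0)" using b by simp
    then show ?thesis using Nil by (simp add: str_val_def indicator_def)
  next
    case (Cons x xs)
    define l where "l = length xs"
    have bpos: "real b > 0" using b by simp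
    have v: "str_val b X = x * b ^ l + str_val b xs" using Cons by (simp add: str_val_Cons l_def)
    have xsl: "str_val b xs < b ^ l" using True Cons str_val_lt[of b xs] by (simp add: is_string_def l_def)
    have vl: "str_val b X < b ^ (l + 1)" using True str_val_lt[of b X] Cons by (simp add: l_def)
    have vlr: "real (str_val b X) < real b ^ (l + 1)"
      using vl by (metis of_nat_less_iff of_nat_power)
    have lenX: "length X = l + 1" using Cons l_def by simp
    show ?thesis
    proof (cases "x = 0")
      case True
      have "str_val b X < b ^ l" using v xsl True by simp
      then have "real (str_val b X) < real b ^ l" by (metis of_nat_less_iff of_nat_power)
      then have "real (str_val b X) / real b ^ (l+1) < 1 / real b"
        using bpos by (simp add: divide_simps)
      then show ?thesis using Cons True lenX by (simp add: indicator_def)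
    next
      case False
      have "1 * b ^ l \<le> x * b ^ l" using False by (intro mult_le_mono1) simp
      then have "b ^ l \<le> str_val b X" using v by linarith
      then have ge: "real b ^ l \<le> real (str_val b X)" by (metis of_nat_le_iff of_nat_power)
      have "real b ^ l > 0" using bpos by simp
      then have vpos: "real (str_val b X) > 0" using ge by linarith
      have in1: "1 / real b \<le> real (str_val b X) / real b ^ (l+1)"
        using ge bpos by (simp add: divide_simps)
      have in2: "real (str_val b X) / real b ^ (l+1) < 1"
        using vlr bpos by (simp add: divide_simps)
      have "str_weight b d k X = ennreal (1 / real b ^ (l+1))"
        using \<open>is_string b X \<and> count_list X d = k\<close> lenX by (simp add: str_weight_def)
      then have "str_weight b d k X * (ennreal (1 / (real (str_val b X) / real b ^ length X)) *
           indicator {1 / real b ..< 1} (real (str_val b X) / real b ^ length X))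
         = ennreal (1 / real b ^ (l+1)) * ennreal (real b ^ (l+1) / real (str_val b X))"
        using in1 in2 lenX by (simp add: indicator_def)
      also have "\<dots> = ennreal (1 / real b ^ (l+1) * (real b ^ (l+1) / real (str_val b X)))"
        by (rule ennreal_mult'[symmetric]) simp
      also have "\<dots> = ennreal (1 / real (str_val b X))"
        using bpos by simp
      finally show ?thesis using Cons False \<open>is_string b X \<and> count_list X d = k\<close> by simp
    qed
  qed
qed

theorem mainTheorem5:
  fixes b d k :: nat
  assumes "b \<ge> 2" and "d < b"
  shows "H b d k = (\<integral>\<^sup>+ x. ennreal (1 / x) * indicator {1 / real b ..< 1} x \<partial>(mu b d k))"
proof -
  define S where "S = {X. is_string b X \<and> count_list X d = k \<and> X \<noteq> [] \<and> hd X \<noteq> 0}"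
  define T where "T = {n::nat. n \<ge> 1 \<and> digit_count b d n = k}"
  note dp = digs_props[OF assms(1)]
  have bij: "bij_betw (str_val b) S T"
  proof (rule bij_betw_imageI)
    show "inj_on (str_val b) S"
      by (rule inj_on_inverseI[where g = "digs b"]) (use digs_str_val[OF assms(1)] in \<open>auto simp: S_def\<close>)
    show "str_val b ` S = T"
    proof
      show "str_val b ` S \<subseteq> T"
      proof
        fix n assume "n \<in> str_val b ` S"
        then obtain X where X: "X \<in> S" "n = str_val b X" by auto
        have dX: "digs b n = X" using X digs_str_val[OF assms(1)] by (auto simp: S_def)
        have "n \<noteq> 0"
        proof
          assume "n = 0" then have "digs b n = []" by (simp add: digs.simps)
          then show False using dX X by (simp add: S_def)
        qed
        moreover have "digit_count b d n = k" using dp[of n d] dX X by (simp add: S_def)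
        ultimately show "n \<in> T" by (simp add: T_def)
      qed
      show "T \<subseteq> str_val b ` S"
      proof
        fix n assume "n \<in> T"
        then have "digs b n \<in> S" "str_val b (digs b n) = n" using dp[of n d] by (auto simp: T_def S_def)
        then show "n \<in> str_val b ` S" by (metis image_eqI)
      qed
    qed
  qed
  define G where "G X = (if X \<in> S then ennreal (1 / real (str_val b X)) else 0)" for X
  have "H b d k = infsum (\<lambda>n. ennreal (1 / real n)) T"
    by (simp add: H_def T_def)
  also have "\<dots> = infsum (\<lambda>X. ennreal (1 / real (str_val b X))) S"
    by (rule infsum_reindex_bij_betw[OF bij, symmetric])
  also have "\<dots> = infsum G UNIV"
    by (rule infsum_cong_neutral) (auto simp: G_def)
  also have "\<dots> = (\<integral>\<^sup>+X. G X \<partial>count_space UNIV)"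
    by (rule infsum_nn_integral_countable)
  also have "\<dots> = (\<integral>\<^sup>+X. str_weight b d k X * (ennreal (1 / (real (str_val b X) / real b ^ length X)) *
           indicator {1 / real b ..< 1} (real (str_val b X) / real b ^ length X)) \<partial>count_space UNIV)"
    using pointwise[OF assms(1)] by (simp add: G_def S_def)
  also have "\<dots> = (\<integral>\<^sup>+ x. ennreal (1 / x) * indicator {1 / real b ..< 1} x \<partial>(mu b d k))"
    unfolding mu_def
    by (subst nn_integral_distr) (simp_all add: nn_integral_density)
  finally show ?thesis .
qed

end
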